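(* Let $0<\alpha\le2$, $j\ne0$, $V\in C^2(\mathbb{T})$, and real numbers $p_1,\dots,p_n\ge0$, $q_1,\dots,q_n$ with $p_k^2+q_k^2>0$ for $1\le k\le n$. If $(c_1,d_1),(c_2,d_2)\in\mathcal{C}$ both solve the system (S), then $(c_1,d_1)=(c_2,d_2)$.
   Context: $\mathbb{T}=\mathbb{R}/\mathbb{Z}$. Set $c_j=(j^2/2)^{1/\alpha}$; $\phi_\alpha(t)=\frac{c_j\alpha}{\alpha-1}t^{(\alpha-1)/\alpha}$ if $\alpha\ne1$, $\phi_\alpha(t)=c_j\ln t$ if $\alpha=1$ ($t>0$). $\mathcal{C}\subset\mathbb{R}^{2n+1}$ is the set of $(a_0,\dots,a_n,b_1,\dots,b_n)$ with $a_0+\sum_{k=1}^n(a_k\cos(2\pi kx)+b_k\sin(2\pi kx))-V(x)>0$ for all $x\in\mathbb{T}$; on $\mathcal{C}$, $\Phi_\alpha(a_0,\dots,b_n)=\int_{\mathbb{T}}\phi_\alpha\big(a_0+\sum_{k=1}^n(a_k\cos(2\pi ky)+b_k\sin(2\pi ky))-V(y)\big)\,dy$. System (S): $\partial\Phi_\alpha/\partial a_0=1$, $\partial\Phi_\alpha/\partial a_k=\frac{p_ka_k+q_kb_k}{p_k^2+q_k^2}$, $\partial\Phi_\alpha/\partial b_k=\frac{p_kb_k-q_ka_k}{p_k^2+q_k^2}$ for $1\le k\le n$. *)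

theory Defs
  imports "HOL-Analysis.Analysis"
begin

definition cj :: "real \<Rightarrow> real \<Rightarrow> real" where
  "cj alpha j = (j^2 / 2) powr (1 / alpha)"

text \<open>phi_alpha(t), meaningful for t > 0\<close>
definition phi :: "real \<Rightarrow> real \<Rightarrow> real \<Rightarrow> real" where
  "phi alpha j t = (if alpha \<noteq> 1
     then cj alpha j * alpha / (alpha - 1) * t powr ((alpha - 1) / alpha)
     else cj alpha j * ln t)"

text \<open>The coefficient vector (a_0,...,a_n,b_1,...,b_n) is represented by a, b :: nat => real,
  only the entries a 0..a n and b 1..b n being relevant.\<close>
definition trig :: "nat \<Rightarrow> (nat \<Rightarrow> real) \<Rightarrow> (nat \<Rightarrow> real) \<Rightarrow> real \<Rightarrow> real" where
  "trig n a b x = a 0 + (\<Sum>k=1..n. a k * cos (2 * pi * real k * x) + b k * sin (2 * pi * real k * x))"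

definition inC :: "nat \<Rightarrow> (real \<Rightarrow> real) \<Rightarrow> (nat \<Rightarrow> real) \<Rightarrow> (nat \<Rightarrow> real) \<Rightarrow> bool" where
  "inC n V a b \<longleftrightarrow> (\<forall>x. trig n a b x - V x > 0)"

text \<open>Phi_alpha, integral over the torus T = R/Z realised as [0,1]\<close>
definition Phi :: "real \<Rightarrow> real \<Rightarrow> nat \<Rightarrow> (real \<Rightarrow> real) \<Rightarrow> (nat \<Rightarrow> real) \<Rightarrow> (nat \<Rightarrow> real) \<Rightarrow> real" where
  "Phi alpha j n V a b = integral {0..1} (\<lambda>y. phi alpha j (trig n a b y - V y))"

definition solves_S :: "real \<Rightarrow> real \<Rightarrow> nat \<Rightarrow> (real \<Rightarrow> real) \<Rightarrow> (nat \<Rightarrow> real) \<Rightarrow> (nat \<Rightarrow> real)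
    \<Rightarrow> (nat \<Rightarrow> real) \<Rightarrow> (nat \<Rightarrow> real) \<Rightarrow> bool" where
  "solves_S alpha j n V p q a b \<longleftrightarrow>
     ((\<lambda>t. Phi alpha j n V (a(0 := t)) b) has_real_derivative 1) (at (a 0)) \<and>
     (\<forall>k\<in>{1..n}.
        ((\<lambda>t. Phi alpha j n V (a(k := t)) b) has_real_derivative
            ((p k * a k + q k * b k) / ((p k)^2 + (q k)^2))) (at (a k)) \<and>
        ((\<lambda>t. Phi alpha j n V a (b(k := t))) has_real_derivative
            ((p k * b k - q k * a k) / ((p k)^2 + (q k)^2))) (at (b k)))"

definition C2_torus :: "(real \<Rightarrow> real) \<Rightarrow> bool" where
  "C2_torus V \<longleftrightarrow> (\<forall>x. V (x + 1) = V x) \<and>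
     (\<exists>V' V''. (\<forall>x. (V has_real_derivative V' x) (at x)) \<and>
               (\<forall>x. (V' has_real_derivative V'' x) (at x)) \<and> continuous_on UNIV V'')"

end

theory Submission
  imports Defs
begin

definition dphi :: "real \<Rightarrow> real \<Rightarrow> real \<Rightarrow> real" where
  "dphi alpha j t = cj alpha j * t powr (- 1 / alpha)"

lemma cj_pos: "j \<noteq> 0 \<Longrightarrow> cj alpha j > 0"
  unfolding cj_def by simp

lemma phi_deriv:
  assumes "alpha > 0" "t > 0"
  shows "(phi alpha j has_real_derivative dphi alpha j t) (at t)"
proof (cases "alpha = 1")
  case True
  have "((\<lambda>t. cj alpha j * ln t) has_real_derivative cj alpha j * (1/t)) (at t)"
    using assms by (auto intro!: derivative_eq_intros)
  moreover have "dphi alpha j t = cj alpha j * (1/t)"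
    using True assms by (simp add: dphi_def powr_neg_one)
  ultimately show ?thesis using True unfolding phi_def by simp
next
  case False
  have "((\<lambda>t. cj alpha j * alpha / (alpha - 1) * t powr ((alpha - 1) / alpha)) has_real_derivative
      cj alpha j * alpha / (alpha - 1) * (((alpha - 1) / alpha) * t powr ((alpha - 1) / alpha - 1))) (at t)"
    using assms by (auto intro!: derivative_eq_intros has_real_derivative_powr)
  moreover have "(alpha - 1) / alpha - 1 = -1/alpha" using assms by (simp add: field_simps)
  moreover have "cj alpha j * alpha / (alpha - 1) * ((alpha - 1) / alpha) = cj alpha j"
    using assms False by (simp add: field_simps)
  moreover have "phi alpha j = (\<lambda>t. cj alpha j * alpha / (alpha - 1) * t powr ((alpha - 1) / alpha))"
    using False by (simp add: phi_def fun_eq_iff)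
  ultimately show ?thesis unfolding dphi_def
    by (metis (no_types, lifting) mult.assoc)
qed

lemma dphi_strict_mono:
  assumes "alpha > 0" "j \<noteq> 0" "0 < s" "s < t"
  shows "dphi alpha j t < dphi alpha j s"
proof -
  have "t powr (-1/alpha) < s powr (-1/alpha)"
    using assms by (intro powr_less_mono2_neg) auto
  thus ?thesis using cj_pos[OF assms(2)] unfolding dphi_def by simp
qed

lemma phi_tangent:
  assumes "alpha > 0" "j \<noteq> 0" "0 < s" "0 < t"
  shows "phi alpha j s \<le> phi alpha j t + dphi alpha j t * (s - t)"
proof (cases s t rule: linorder_cases)
  case less
  then obtain z where z: "s < z" "z < t" "phi alpha j t - phi alpha j s = (t - s) * dphi alpha j z"
    using MVT2[of s t "phi alpha j" "dphi alpha j"] phi_deriv assms by force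
  have "dphi alpha j t < dphi alpha j z" using dphi_strict_mono assms z by force
  then have "(t - s) * dphi alpha j t \<le> (t - s) * dphi alpha j z" using less by simp
  then show ?thesis using z by (simp add: algebra_simps)
next
  case greater
  then obtain z where z: "t < z" "z < s" "phi alpha j s - phi alpha j t = (s - t) * dphi alpha j z"
    using MVT2[of t s "phi alpha j" "dphi alpha j"] phi_deriv assms by force
  have "dphi alpha j z < dphi alpha j t" using dphi_strict_mono assms z by force
  then have "(s - t) * dphi alpha j z \<le> (s - t) * dphi alpha j t" using greater by simp
  then show ?thesis using z by (simp add: algebra_simps)
qed simp

lemma phi_cont: "alpha > 0 \<Longrightarrow> continuous_on {0<..} (phi alpha j)"
  by (meson DERIV_isCont continuous_at_imp_continuous_on greaterThan_iff phi_deriv)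

lemma dphi_cont: "continuous_on {0<..} (dphi alpha j)"
  unfolding dphi_def by (intro continuous_intros) auto

lemma cont_phi_comp:
  fixes g :: "real \<Rightarrow> real"
  assumes "alpha > 0" "continuous_on {0..1} g" "\<forall>y\<in>{0..1}. g y > 0"
  shows "continuous_on {0..1} (\<lambda>y. phi alpha j (g y))"
  by (rule continuous_on_compose2[OF phi_cont[OF assms(1)] assms(2)]) (use assms in auto)

lemma cont_dphi_comp:
  fixes g :: "real \<Rightarrow> real"
  assumes "continuous_on {0..1} g" "\<forall>y\<in>{0..1}. g y > 0"
  shows "continuous_on {0..1} (\<lambda>y. dphi alpha j (g y))"
  by (rule continuous_on_compose2[OF dphi_cont assms(1)]) (use assms in auto)

lemma partial_eq:
  fixes u c :: "real \<Rightarrow> real" and t0 D :: real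
  assumes a: "alpha > 0" and j: "j \<noteq> 0"
    and cu: "continuous_on {0..1} u" and up: "\<forall>y\<in>{0..1}. u y > 0"
    and cc: "continuous_on {0..1} c" and cb: "\<forall>y\<in>{0..1}. \<bar>c y\<bar> \<le> 1"
    and der: "((\<lambda>t. integral {0..1} (\<lambda>y. phi alpha j (u y + (t - t0) * c y))) has_real_derivative D) (at t0)"
  shows "D = integral {0..1} (\<lambda>y. dphi alpha j (u y) * c y)"
proof -
  define F where "F = (\<lambda>t. integral {0..1} (\<lambda>y. phi alpha j (u y + (t - t0) * c y)))"
  define L where "L = integral {0..1} (\<lambda>y. dphi alpha j (u y) * c y)"
  obtain y0 where y0: "y0 \<in> {0..1}" "\<forall>y\<in>{0..1}. u y0 \<le> u y"
    using continuous_attains_inf[of "{0..1::real}" u] cu by auto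
  define m where "m = u y0"
  have m: "m > 0" using up y0 m_def by auto
  have key: "F (t0 + s) - F t0 \<le> s * L" if s: "\<bar>s\<bar> < m" for s
  proof -
    have pos: "u y + s * c y > 0" if "y \<in> {0..1}" for y
    proof -
      have "\<bar>s * c y\<bar> \<le> \<bar>s\<bar>" using cb that by (simp add: abs_mult mult_left_le)
      moreover have "m \<le> u y" using y0 that m_def by auto
      ultimately show ?thesis using s by linarith
    qed
    have c1: "continuous_on {0..1} (\<lambda>y. u y + s * c y)"
      by (intro continuous_intros cu cc)
    have i1: "(\<lambda>y. phi alpha j (u y + s * c y)) integrable_on {0..1}"
      by (rule integrable_continuous_interval, rule cont_phi_comp[OF a c1]) (use pos in auto)
    have i2: "(\<lambda>y. phi alpha j (u y)) integrable_on {0..1}"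
      by (rule integrable_continuous_interval, rule cont_phi_comp[OF a cu up])
    have i3: "(\<lambda>y. dphi alpha j (u y) * c y) integrable_on {0..1}"
      by (rule integrable_continuous_interval, intro continuous_intros cont_dphi_comp cu up cc)
    have "integral {0..1} (\<lambda>y. phi alpha j (u y + s * c y))
        \<le> integral {0..1} (\<lambda>y. phi alpha j (u y) + s * (dphi alpha j (u y) * c y))"
    proof (rule integral_le[OF i1])
      show "(\<lambda>y. phi alpha j (u y) + s * (dphi alpha j (u y) * c y)) integrable_on {0..1}"
        by (intro integrable_add i2 integrable_on_mult_right i3)
      fix y :: real assume "y \<in> {0..1}"
      then show "phi alpha j (u y + s * c y) \<le> phi alpha j (u y) + s * (dphi alpha j (u y) * c y)"
        using phi_tangent[OF a j pos[of y] up[rule_format, of y]] by (simp add: algebra_simps)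
    qed
    also have "\<dots> = integral {0..1} (\<lambda>y. phi alpha j (u y)) + s * L"
      unfolding L_def by (simp add: integral_add i2 integrable_on_mult_right[OF i3])
    finally show ?thesis unfolding F_def by simp
  qed
  have lim: "((\<lambda>h. (F (t0 + h) - F t0) / h) \<longlongrightarrow> D) (at 0)"
    using der unfolding F_def DERIV_def .
  have "D \<le> L"
  proof (rule tendsto_upperbound)
    show "((\<lambda>h. (F (t0 + h) - F t0) / h) \<longlongrightarrow> D) (at_right 0)"
      using lim by (rule tendsto_mono[OF at_le, rotated]) simp
    show "\<forall>\<^sub>F h in at_right 0. (F (t0 + h) - F t0) / h \<le> L"
      unfolding eventually_at_right_field
    proof (intro exI[of _ m] conjI allI impI)
      fix h :: real assume "0 < h" "h < m"
      then show "(F (t0 + h) - F t0) / h \<le> L" using key[of h] by (simp add: divide_le_eq mult.commute)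
    qed (use m in auto)
  qed simp
  moreover have "L \<le> D"
  proof (rule tendsto_lowerbound)
    show "((\<lambda>h. (F (t0 + h) - F t0) / h) \<longlongrightarrow> D) (at_left 0)"
      using lim by (rule tendsto_mono[OF at_le, rotated]) simp
    show "\<forall>\<^sub>F h in at_left 0. L \<le> (F (t0 + h) - F t0) / h"
      unfolding eventually_at_left_field
    proof (intro exI[of _ "-m"] conjI allI impI)
      fix h :: real assume "-m < h" "h < 0"
      then show "L \<le> (F (t0 + h) - F t0) / h" using key[of h] by (simp add: le_divide_eq mult.commute)
    qed (use m in auto)
  qed simp
  ultimately show ?thesis unfolding L_def by simp
qed

lemma trig_upd_a0: "trig n (a(0 := t)) b y = trig n a b y + (t - a 0)"
proof -
  have "(\<Sum>i=1..n. (a(0 := t)) i * cos (2 * pi * real i * y) + b i * sin (2 * pi * real i * y))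
      = (\<Sum>i=1..n. a i * cos (2 * pi * real i * y) + b i * sin (2 * pi * real i * y))"
    by (rule sum.cong) auto
  then show ?thesis unfolding trig_def by simp
qed

lemma sum_upd_aux:
  fixes f g :: "nat \<Rightarrow> real"
  assumes "k \<in> {1..n}" "\<And>i. i \<in> {1..n} \<Longrightarrow> i \<noteq> k \<Longrightarrow> f i = g i"
  shows "(\<Sum>i=1..n. f i) = (\<Sum>i=1..n. g i) + (f k - g k)"
proof -
  have "(\<Sum>i=1..n. f i) = (\<Sum>i=1..n. g i + (if i = k then f k - g k else 0))"
    by (rule sum.cong) (use assms in auto)
  also have "\<dots> = (\<Sum>i=1..n. g i) + (f k - g k)"
    using assms(1) by (simp add: sum.distrib)
  finally show ?thesis .
qed

lemma trig_upd_a: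
  assumes "k \<in> {1..n}"
  shows "trig n (a(k := t)) b y = trig n a b y + (t - a k) * cos (2 * pi * real k * y)"
  unfolding trig_def
  by (subst sum_upd_aux[OF assms]) (use assms in \<open>auto simp: algebra_simps\<close>)

lemma trig_upd_b:
  assumes "k \<in> {1..n}"
  shows "trig n a (b(k := t)) y = trig n a b y + (t - b k) * sin (2 * pi * real k * y)"
  unfolding trig_def
  by (subst sum_upd_aux[OF assms]) (use assms in \<open>auto simp: algebra_simps\<close>)

lemma trig_cont: "continuous_on A (trig n a b)"
  unfolding trig_def by (intro continuous_intros)

lemma solution_facts:
  fixes V :: "real \<Rightarrow> real"
  assumes a: "alpha > 0" and j: "j \<noteq> 0" and cV: "continuous_on {0..1} V"
    and C: "inC n V a b" and S: "solves_S alpha j n V p q a b"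
    and u_def: "u = (\<lambda>y. trig n a b y - V y)"
  shows "integral {0..1} (\<lambda>y. dphi alpha j (u y)) = 1"
    and "\<And>k. k \<in> {1..n} \<Longrightarrow> integral {0..1} (\<lambda>y. dphi alpha j (u y) * cos (2 * pi * real k * y))
          = (p k * a k + q k * b k) / ((p k)^2 + (q k)^2)"
    and "\<And>k. k \<in> {1..n} \<Longrightarrow> integral {0..1} (\<lambda>y. dphi alpha j (u y) * sin (2 * pi * real k * y))
          = (p k * b k - q k * a k) / ((p k)^2 + (q k)^2)"
proof -
  have cu: "continuous_on {0..1} u" unfolding u_def by (intro continuous_intros trig_cont cV)
  have up: "\<forall>y\<in>{0..1}. u y > 0" using C unfolding inC_def u_def by auto
  have d0: "((\<lambda>t. Phi alpha j n V (a(0 := t)) b) has_real_derivative 1) (at (a 0))"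
    using S unfolding solves_S_def by blast
  have "(\<lambda>t. Phi alpha j n V (a(0 := t)) b) = (\<lambda>t. integral {0..1} (\<lambda>y. phi alpha j (u y + (t - a 0) * 1)))"
    unfolding Phi_def u_def trig_upd_a0 by (simp add: algebra_simps)
  with d0 have "1 = integral {0..1} (\<lambda>y. dphi alpha j (u y) * 1)"
    by (intro partial_eq[OF a j cu up]) (auto intro: continuous_intros)
  then show "integral {0..1} (\<lambda>y. dphi alpha j (u y)) = 1" by simp
  show "integral {0..1} (\<lambda>y. dphi alpha j (u y) * cos (2 * pi * real k * y))
          = (p k * a k + q k * b k) / ((p k)^2 + (q k)^2)" if k: "k \<in> {1..n}" for k
  proof -
  have dk: "((\<lambda>t. Phi alpha j n V (a(k := t)) b) has_real_derivative
            ((p k * a k + q k * b k) / ((p k)^2 + (q k)^2))) (at (a k))"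
    using S k unfolding solves_S_def by blast
  have "(\<lambda>t. Phi alpha j n V (a(k := t)) b) = (\<lambda>t. integral {0..1} (\<lambda>y. phi alpha j (u y + (t - a k) * cos (2 * pi * real k * y))))"
    unfolding Phi_def u_def trig_upd_a[OF k] by (simp add: algebra_simps)
  with dk show "integral {0..1} (\<lambda>y. dphi alpha j (u y) * cos (2 * pi * real k * y))
          = (p k * a k + q k * b k) / ((p k)^2 + (q k)^2)"
    by (intro partial_eq[OF a j cu up, symmetric]) (auto intro!: continuous_intros)
  qed
  show "integral {0..1} (\<lambda>y. dphi alpha j (u y) * sin (2 * pi * real k * y))
          = (p k * b k - q k * a k) / ((p k)^2 + (q k)^2)" if k: "k \<in> {1..n}" for k
  proof -
  have dk: "((\<lambda>t. Phi alpha j n V a (b(k := t))) has_real_derivative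
            ((p k * b k - q k * a k) / ((p k)^2 + (q k)^2))) (at (b k))"
    using S k unfolding solves_S_def by blast
  have "(\<lambda>t. Phi alpha j n V a (b(k := t))) = (\<lambda>t. integral {0..1} (\<lambda>y. phi alpha j (u y + (t - b k) * sin (2 * pi * real k * y))))"
    unfolding Phi_def u_def trig_upd_b[OF k] by (simp add: algebra_simps)
  with dk show "integral {0..1} (\<lambda>y. dphi alpha j (u y) * sin (2 * pi * real k * y))
          = (p k * b k - q k * a k) / ((p k)^2 + (q k)^2)"
    by (intro partial_eq[OF a j cu up, symmetric]) (auto intro!: continuous_intros)
  qed
qed

lemma cont_int: "continuous_on {0..1::real} (f::real\<Rightarrow>real) \<Longrightarrow> f integrable_on {0..1}"
  by (simp add: integrable_continuous_real)

theorem proposition4p2: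
  fixes alpha j :: real and n :: nat and V :: "real \<Rightarrow> real"
    and p q a1 b1 a2 b2 :: "nat \<Rightarrow> real"
  assumes "0 < alpha" and "alpha \<le> 2" and "j \<noteq> 0"
    and "C2_torus V"
    and "\<forall>k\<in>{1..n}. p k \<ge> 0 \<and> (p k)^2 + (q k)^2 > 0"
    and "inC n V a1 b1" and "solves_S alpha j n V p q a1 b1"
    and "inC n V a2 b2" and "solves_S alpha j n V p q a2 b2"
  shows "(\<forall>k\<in>{0..n}. a1 k = a2 k) \<and> (\<forall>k\<in>{1..n}. b1 k = b2 k)"
proof -
  note a = assms(1) and j = assms(3) and pq = assms(5)
  obtain V' where "\<forall>x. (V has_real_derivative V' x) (at x)"
    using assms(4) unfolding C2_torus_def by blast
  then have cV: "continuous_on {0..1} V"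
    by (meson DERIV_isCont continuous_at_imp_continuous_on)
  define u1 where "u1 = (\<lambda>y. trig n a1 b1 y - V y)"
  define u2 where "u2 = (\<lambda>y. trig n a2 b2 y - V y)"
  have cu1: "continuous_on {0..1} u1" unfolding u1_def by (intro continuous_intros trig_cont cV)
  have cu2: "continuous_on {0..1} u2" unfolding u2_def by (intro continuous_intros trig_cont cV)
  have up1: "\<forall>y\<in>{0..1}. u1 y > 0" using assms(6) unfolding inC_def u1_def by auto
  have up2: "\<forall>y\<in>{0..1}. u2 y > 0" using assms(8) unfolding inC_def u2_def by auto
  note F1 = solution_facts[OF a j cV assms(6,7) u1_def]
  note F2 = solution_facts[OF a j cV assms(8,9) u2_def]
  define g where "g = (\<lambda>y. dphi alpha j (u1 y) - dphi alpha j (u2 y))"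
  define da where "da = (\<lambda>k. a1 k - a2 k)"
  define db where "db = (\<lambda>k. b1 k - b2 k)"
  define C where "C = (\<lambda>k y. cos (2 * pi * real k * y))"
  define S where "S = (\<lambda>k y. sin (2 * pi * real k * y))"
  have cg: "continuous_on {0..1} g" unfolding g_def
    by (intro continuous_intros cont_dphi_comp cu1 cu2 up1 up2)
  have w: "u1 y - u2 y = da 0 + (\<Sum>k=1..n. da k * C k y + db k * S k y)" for y
    unfolding u1_def u2_def trig_def da_def db_def C_def S_def
    by (simp add: sum_subtractf[symmetric] algebra_simps)
  have ig: "integral {0..1} g = 0"
    unfolding g_def using F1(1) F2(1)
    by (subst integral_diff) (auto intro!: cont_int continuous_intros cont_dphi_comp cu1 cu2 up1 up2)
  have igC: "integral {0..1} (\<lambda>y. g y * C k y) = (p k * da k + q k * db k) / ((p k)^2 + (q k)^2)"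
    if k: "k \<in> {1..n}" for k
  proof -
    have "integral {0..1} (\<lambda>y. g y * C k y) = integral {0..1} (\<lambda>y. dphi alpha j (u1 y) * C k y - dphi alpha j (u2 y) * C k y)"
      unfolding g_def by (simp add: algebra_simps)
    also have "\<dots> = (p k * a1 k + q k * b1 k) / ((p k)^2 + (q k)^2) - (p k * a2 k + q k * b2 k) / ((p k)^2 + (q k)^2)"
      using F1(2)[OF k] F2(2)[OF k] unfolding C_def
      by (subst integral_diff) (auto intro!: cont_int continuous_intros cont_dphi_comp cu1 cu2 up1 up2)
    also have "\<dots> = (p k * da k + q k * db k) / ((p k)^2 + (q k)^2)"
      unfolding da_def db_def by (simp add: diff_divide_distrib[symmetric] algebra_simps)
    finally show ?thesis .
  qed
  have igS: "integral {0..1} (\<lambda>y. g y * S k y) = (p k * db k - q k * da k) / ((p k)^2 + (q k)^2)"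
    if k: "k \<in> {1..n}" for k
  proof -
    have "integral {0..1} (\<lambda>y. g y * S k y) = integral {0..1} (\<lambda>y. dphi alpha j (u1 y) * S k y - dphi alpha j (u2 y) * S k y)"
      unfolding g_def by (simp add: algebra_simps)
    also have "\<dots> = (p k * b1 k - q k * a1 k) / ((p k)^2 + (q k)^2) - (p k * b2 k - q k * a2 k) / ((p k)^2 + (q k)^2)"
      using F1(3)[OF k] F2(3)[OF k] unfolding S_def
      by (subst integral_diff) (auto intro!: cont_int continuous_intros cont_dphi_comp cu1 cu2 up1 up2)
    also have "\<dots> = (p k * db k - q k * da k) / ((p k)^2 + (q k)^2)"
      unfolding da_def db_def by (simp add: diff_divide_distrib[symmetric] algebra_simps)
    finally show ?thesis .
  qed
  have cC: "continuous_on {0..1} (\<lambda>y. g y * C k y)" for k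
    unfolding C_def by (intro continuous_intros cg)
  have cS: "continuous_on {0..1} (\<lambda>y. g y * S k y)" for k
    unfolding S_def by (intro continuous_intros cg)
  have "integral {0..1} (\<lambda>y. g y * (u1 y - u2 y))
      = integral {0..1} (\<lambda>y. da 0 * g y + (\<Sum>k=1..n. da k * (g y * C k y) + db k * (g y * S k y)))"
    unfolding w by (simp add: sum_distrib_left algebra_simps)
  also have "\<dots> = da 0 * integral {0..1} g + (\<Sum>k=1..n. da k * integral {0..1} (\<lambda>y. g y * C k y) + db k * integral {0..1} (\<lambda>y. g y * S k y))"
    apply (subst integral_add)
      apply (auto intro!: cont_int continuous_intros cg cC cS integrable_sum integrable_on_mult_right)[2]
    apply (subst integral_sum)
      apply (auto intro!: cont_int continuous_intros cg cC cS integrable_sum integrable_on_mult_right)[2]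
    apply (subst integral_add)
      apply (auto intro!: cont_int continuous_intros cg cC cS integrable_sum integrable_on_mult_right)[2]
    apply simp
    done
  also have "\<dots> = (\<Sum>k=1..n. p k * ((da k)^2 + (db k)^2) / ((p k)^2 + (q k)^2))"
    unfolding ig mult_zero_right add_0
  proof (rule sum.cong[OF refl])
    fix k assume k: "k \<in> {1..n}"
    have "(p k)^2 + (q k)^2 > 0" using pq k by blast
    then have N: "(p k)^2 + (q k)^2 \<noteq> 0" by linarith
    show "da k * integral {0..1} (\<lambda>y. g y * C k y) + db k * integral {0..1} (\<lambda>y. g y * S k y) =
          p k * ((da k)^2 + (db k)^2) / ((p k)^2 + (q k)^2)"
    proof -
      define M where "M = (p k)^2 + (q k)^2"
      have "da k * ((p k * da k + q k * db k) / M) + db k * ((p k * db k - q k * da k) / M)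
          = (da k * (p k * da k + q k * db k) + db k * (p k * db k - q k * da k)) / M"
        by (metis add_divide_distrib times_divide_eq_right)
      also have "da k * (p k * da k + q k * db k) + db k * (p k * db k - q k * da k) = p k * ((da k)^2 + (db k)^2)"
        by (simp add: algebra_simps power2_eq_square)
      finally show ?thesis unfolding igC[OF k] igS[OF k] M_def .
    qed
  qed
  also have "\<dots> \<ge> 0"
    using pq by (intro sum_nonneg divide_nonneg_nonneg mult_nonneg_nonneg) auto
  finally have ge: "integral {0..1} (\<lambda>y. g y * (u1 y - u2 y)) \<ge> 0" .
  have le: "g y * (u1 y - u2 y) \<le> 0" and strict: "u1 y \<noteq> u2 y \<Longrightarrow> g y * (u1 y - u2 y) < 0"
    if y: "y \<in> {0..1}" for y
  proof -
    have "g y * (u1 y - u2 y) < 0" if ne: "u1 y \<noteq> u2 y"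
    proof (cases "u1 y < u2 y")
      case True
      then have "dphi alpha j (u2 y) < dphi alpha j (u1 y)"
        using dphi_strict_mono[OF a j] up1 y by auto
      then show ?thesis using True unfolding g_def by (simp add: mult_pos_neg)
    next
      case False
      then have "u2 y < u1 y" using ne by auto
      then have "dphi alpha j (u1 y) < dphi alpha j (u2 y)"
        using dphi_strict_mono[OF a j] up2 y by auto
      then show ?thesis using \<open>u2 y < u1 y\<close> unfolding g_def by (simp add: mult_neg_pos)
    qed
    note st = this
    then show "g y * (u1 y - u2 y) \<le> 0"
      by (cases "u1 y = u2 y") auto
    show "u1 y \<noteq> u2 y \<Longrightarrow> g y * (u1 y - u2 y) < 0" by (rule st)
  qed
  have cgw: "continuous_on {0..1} (\<lambda>y. - (g y * (u1 y - u2 y)))"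
    by (intro continuous_intros cg cu1 cu2)
  have "integral {0..1} (\<lambda>y. - (g y * (u1 y - u2 y))) = 0"
  proof -
    have "integral {0..1} (\<lambda>y. - (g y * (u1 y - u2 y))) \<ge> 0"
      using le by (intro integral_nonneg cont_int cgw) auto
    moreover have "integral {0..1} (\<lambda>y. - (g y * (u1 y - u2 y))) = - integral {0..1} (\<lambda>y. g y * (u1 y - u2 y))"
      by (rule integral_neg)
    ultimately show ?thesis using ge by linarith
  qed
  then have "\<forall>y\<in>{0..1}. - (g y * (u1 y - u2 y)) = 0"
    using integral_eq_0_iff[OF cgw, of ] le by auto
  then have ueq: "\<forall>y\<in>{0..1}. u1 y = u2 y" using strict by force
  have bk: "da k = 0 \<and> db k = 0" if k: "k \<in> {1..n}" for k
  proof -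
    have "integral {0..1} (\<lambda>y. g y * C k y) = 0"
    proof -
      have z: "\<And>y. y \<in> {0..1} \<Longrightarrow> g y * C k y = 0" using ueq by (simp add: g_def)
      have "integral {0..1} (\<lambda>y. g y * C k y) = integral {0..1} (\<lambda>y::real. 0::real)"
        using z by (metis (no_types, lifting) Henstock_Kurzweil_Integration.integral_cong)
      then show ?thesis by simp
    qed
    then have e1: "p k * da k + q k * db k = 0" unfolding igC[OF k] using pq k by auto
    have "integral {0..1} (\<lambda>y. g y * S k y) = 0"
    proof -
      have z: "\<And>y. y \<in> {0..1} \<Longrightarrow> g y * S k y = 0" using ueq by (simp add: g_def)
      have "integral {0..1} (\<lambda>y. g y * S k y) = integral {0..1} (\<lambda>y::real. 0::real)"
        using z by (metis (no_types, lifting) Henstock_Kurzweil_Integration.integral_cong)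
      then show ?thesis by simp
    qed
    then have e2: "p k * db k - q k * da k = 0" unfolding igS[OF k] using pq k by auto
    have N: "(p k)^2 + (q k)^2 > 0" using pq k by blast
    have "((p k)^2 + (q k)^2) * da k = p k * (p k * da k + q k * db k) - q k * (p k * db k - q k * da k)"
      by (simp add: algebra_simps power2_eq_square)
    also have "\<dots> = 0" using e1 e2 by simp
    finally have "da k = 0" using N by (metis less_irrefl mult_eq_0_iff)
    have "((p k)^2 + (q k)^2) * db k = q k * (p k * da k + q k * db k) + p k * (p k * db k - q k * da k)"
      by (simp add: algebra_simps power2_eq_square)
    also have "\<dots> = 0" using e1 e2 by simp
    finally have "db k = 0" using N by (metis less_irrefl mult_eq_0_iff)
    with \<open>da k = 0\<close> show ?thesis by simp
  qed
  have "u1 0 - u2 0 = da 0" unfolding w using bk by (simp add: sum.neutral)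
  then have "da 0 = 0" using ueq by auto
  show ?thesis
  proof (intro conjI ballI)
    fix k assume k: "k \<in> {0..n}"
    show "a1 k = a2 k"
    proof (cases "k = 0")
      case True then show ?thesis using \<open>da 0 = 0\<close> unfolding da_def by simp
    next
      case False then have "k \<in> {1..n}" using k by auto
      then show ?thesis using bk unfolding da_def by simp
    qed
  next
    fix k assume "k \<in> {1..n}"
    then show "b1 k = b2 k" using bk unfolding db_def by simp
  qed
qed

end
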